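(* Let $p\colon E\to B$ be an arc-covering with $E$ path-connected. Then every fiber $p^{-1}(b)$, $b\in B$ (with the subspace topology from $E$), is a $T_1$-space.
   Context: All maps are continuous. A map $p\colon E\to B$ is an arc-covering if (i) for every $e_0\in E$, every $t_0\in[0,1]$ and every map $f\colon [0,1]\to B$ with $f(t_0)=p(e_0)$ there is a map $g\colon[0,1]\to E$ with $p\circ g=f$ and $g(t_0)=e_0$, and (ii) such lifts are unique: if $g,h\colon[0,1]\to E$ satisfy $p\circ g=p\circ h$ and $g(t_0)=h(t_0)$ for some $t_0$, then $g=h$. *)

theory Defs
  imports "HOL-Analysis.Analysis"
begin

text \<open>Maps from [0,1] are HOL functions on real whose
restriction to [0,1] is continuous; only their values on [0,1] matter.\<close>

definition arc_covering :: "'a topology \<Rightarrow> 'b topology \<Rightarrow> ('a \<Rightarrow> 'b) \<Rightarrow> bool" where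
  "arc_covering E B p \<longleftrightarrow>
     continuous_map E B p \<and>
     (\<forall>e0 t0 f. e0 \<in> topspace E \<and> t0 \<in> {0..1::real} \<and>
        continuous_map (top_of_set {0..1}) B f \<and> f t0 = p e0 \<longrightarrow>
        (\<exists>g. continuous_map (top_of_set {0..1}) E g \<and>
             (\<forall>t\<in>{0..1}. p (g t) = f t) \<and> g t0 = e0)) \<and>
     (\<forall>g h t0. continuous_map (top_of_set {0..1::real}) E g \<and>
        continuous_map (top_of_set {0..1}) E h \<and>
        (\<forall>t\<in>{0..1}. p (g t) = p (h t)) \<and> t0 \<in> {0..1} \<and> g t0 = h t0 \<longrightarrow>
        (\<forall>t\<in>{0..1}. g t = h t))"

end

theory Submission
  imports Defs
begin

theorem proposition2p4:
  fixes E :: "'a topology" and B :: "'b topology" and p :: "'a \<Rightarrow> 'b"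
  assumes "arc_covering E B p"
    and "path_connected_space E"
    and "b \<in> topspace B"
  shows "t1_space (subtopology E {e \<in> topspace E. p e = b})"
  unfolding t1_space_def
proof (intro ballI impI)
  define F where "F = {e \<in> topspace E. p e = b}"
  fix x y
  assume x: "x \<in> topspace (subtopology E {e \<in> topspace E. p e = b})"
    and y: "y \<in> topspace (subtopology E {e \<in> topspace E. p e = b})" and xy: "x \<noteq> y"
  have xE: "x \<in> topspace E" "p x = b" and yE: "y \<in> topspace E" "p y = b"
    using x y by auto
  show "\<exists>U. openin (subtopology E {e \<in> topspace E. p e = b}) U \<and> x \<in> U \<and> y \<notin> U"
  proof (rule ccontr)
    assume H: "\<not> ?thesis"
    have H2: "\<And>U. openin E U \<Longrightarrow> x \<in> U \<Longrightarrow> y \<in> U"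
    proof -
      fix U assume U: "openin E U" "x \<in> U"
      have "openin (subtopology E {e \<in> topspace E. p e = b}) (U \<inter> {e \<in> topspace E. p e = b})"
        using U by (simp add: openin_subtopology_Int)
      then show "y \<in> U" using H U xE by blast
    qed
    define g where "g = (\<lambda>t::real. if t < 1 then y else x)"
    define h where "h = (\<lambda>t::real. y)"
    have cg: "continuous_map (top_of_set {0..1}) E g"
      unfolding continuous_map_def
    proof (intro conjI allI impI)
      show "g \<in> topspace (top_of_set {0..1}) \<rightarrow> topspace E"
        using xE yE by (auto simp: g_def)
    next
      fix U assume U: "openin E U"
      show "openin (top_of_set {0..1}) {t \<in> topspace (top_of_set {0..1::real}). g t \<in> U}"
      proof (cases "x \<in> U")
        case True
        then have "y \<in> U" using H2 U by blast
        then have "{t \<in> topspace (top_of_set {0..1::real}). g t \<in> U} = topspace (top_of_set {0..1})"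
          using True by (auto simp: g_def)
        then show ?thesis by (metis openin_topspace)
      next
        case False
        show ?thesis
        proof (cases "y \<in> U")
          case True
          then have "{t \<in> topspace (top_of_set {0..1::real}). g t \<in> U} = {0..1} \<inter> {..<1}"
            using False by (auto simp: g_def)
          then show ?thesis
            by (metis open_lessThan openin_open_Int)
        next
          case F2: False
          have eq: "{t \<in> topspace (top_of_set {0..1::real}). g t \<in> U} = {}"
            using False F2 by (auto simp: g_def)
          show ?thesis unfolding eq by simp
        qed
      qed
    qed
    have ch: "continuous_map (top_of_set {0..1::real}) E h"
      unfolding h_def using yE by simp
    have uniq: "\<forall>g h t0. continuous_map (top_of_set {0..1::real}) E g \<and>
        continuous_map (top_of_set {0..1}) E h \<and>
        (\<forall>t\<in>{0..1}. p (g t) = p (h t)) \<and> t0 \<in> {0..1} \<and> g t0 = h t0 \<longrightarrow>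
        (\<forall>t\<in>{0..1}. g t = h t)"
      using assms(1) unfolding arc_covering_def by blast
    have pr: "\<forall>t\<in>{0..1::real}. p (g t) = p (h t)"
      using xE yE by (simp add: g_def h_def)
    have g0: "g 0 = h 0" by (simp add: g_def h_def)
    have "\<forall>t\<in>{0..1::real}. g t = h t"
      using uniq[rule_format, OF conjI[OF cg conjI[OF ch conjI[OF pr conjI[OF _ g0]]]]] by simp
    then have "g 1 = h 1" by simp
    then show False using xy by (simp add: g_def h_def)
  qed
qed

end
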